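(* For any VarianceReduction algorithm (possibly using shared randomness) in which any machine receives at most $b$ bits in expectation, there is a valid input distribution for which $\mathbb{E}[\|\mathbf{EST}-\boldsymbol\nabla\|^2]=\Omega\!\left(\sigma^2\,2^{-3b/d}\right)$.
   Context: VarianceReduction: there are $n$ machines and an unknown true vector $\boldsymbol\nabla\in\mathbb{R}^d$. Each machine $v$ receives an independent random input $\mathbf{x}_v$ with $\mathbb{E}[\mathbf{x}_v]=\boldsymbol\nabla$ and $\mathbb{E}[\|\mathbf{x}_v-\boldsymbol\nabla\|^2]\le\sigma^2$, $\sigma$ known. All machines must output the same $\mathbf{EST}\in\mathbb{R}^d$ with $\mathbb{E}[\mathbf{EST}]=\boldsymbol\nabla$. $\|\cdot\|$ is a fixed one of the $\ell_1,\ell_2,\ell_\infty$ norms. Algorithms may use a common random string. Bits received by a machine count all bits it receives from any source. The hidden constant is absolute. *)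

theory Defs
  imports "HOL-Probability.Probability"
begin

text \<open>Vectors in R^d are functions nat => real; only coordinates i < d matter.\<close>

datatype normkind = L1 | L2 | Linf

definition vnorm :: "normkind \<Rightarrow> nat \<Rightarrow> (nat \<Rightarrow> real) \<Rightarrow> real" where
  "vnorm p d x = (case p of
      L1 \<Rightarrow> (\<Sum>i<d. \<bar>x i\<bar>)
    | L2 \<Rightarrow> sqrt (\<Sum>i<d. (x i)\<^sup>2)
    | Linf \<Rightarrow> Max ((\<lambda>i. \<bar>x i\<bar>) ` {..<d}))"

definition vec_space :: "nat \<Rightarrow> (nat \<Rightarrow> real) measure" where
  "vec_space d = PiM {..<d} (\<lambda>_. borel)"

definition inputs_space :: "nat \<Rightarrow> nat \<Rightarrow> (nat \<Rightarrow> nat \<Rightarrow> real) measure" where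
  "inputs_space d n = PiM {..<n} (\<lambda>_. vec_space d)"

text \<open>The common random string: infinitely many independent fair coins.\<close>
definition coins :: "(nat \<Rightarrow> bool) measure" where
  "coins = PiM UNIV (\<lambda>_. measure_pmf (bernoulli_pmf (1/2)))"

definition joint :: "nat \<Rightarrow> (nat \<Rightarrow> (nat \<Rightarrow> real) measure)
    \<Rightarrow> ((nat \<Rightarrow> nat \<Rightarrow> real) \<times> (nat \<Rightarrow> bool)) measure" where
  "joint n D = PiM {..<n} D \<Otimes>\<^sub>M coins"

definition valid_input :: "normkind \<Rightarrow> nat \<Rightarrow> nat \<Rightarrow> real \<Rightarrow> (nat \<Rightarrow> real)
    \<Rightarrow> (nat \<Rightarrow> (nat \<Rightarrow> real) measure) \<Rightarrow> bool" where
  "valid_input p d n \<sigma> g D \<longleftrightarrow>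
     (\<forall>v<n. prob_space (D v) \<and> sets (D v) = sets (vec_space d) \<and>
        (\<forall>i<d. integrable (D v) (\<lambda>x. x i) \<and> (\<integral>x. x i \<partial>D v) = g i) \<and>
        (\<integral>\<^sup>+x. ennreal ((vnorm p d (\<lambda>i. x i - g i))\<^sup>2) \<partial>D v) \<le> ennreal (\<sigma>\<^sup>2))"

definition unbiased :: "normkind \<Rightarrow> nat \<Rightarrow> nat \<Rightarrow> real
    \<Rightarrow> ((nat \<Rightarrow> nat \<Rightarrow> real) \<Rightarrow> (nat \<Rightarrow> bool) \<Rightarrow> nat \<Rightarrow> real) \<Rightarrow> bool" where
  "unbiased p d n \<sigma> EST \<longleftrightarrow>
     (\<forall>g D. valid_input p d n \<sigma> g D \<longrightarrow>
        (\<forall>i<d. integrable (joint n D) (\<lambda>z. EST (fst z) (snd z) i) \<and>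
               (\<integral>z. EST (fst z) (snd z) i \<partial>joint n D) = g i))"

text \<open>Every machine v outputs EST, computed from its own input, the shared random
  string and the bits Msg v it receives (from any source).\<close>
definition local_view :: "nat \<Rightarrow> nat
    \<Rightarrow> ((nat \<Rightarrow> nat \<Rightarrow> real) \<Rightarrow> (nat \<Rightarrow> bool) \<Rightarrow> nat \<Rightarrow> real)
    \<Rightarrow> (nat \<Rightarrow> (nat \<Rightarrow> nat \<Rightarrow> real) \<Rightarrow> (nat \<Rightarrow> bool) \<Rightarrow> bool list)
    \<Rightarrow> (nat \<Rightarrow> (nat \<Rightarrow> real) \<Rightarrow> (nat \<Rightarrow> bool) \<Rightarrow> bool list \<Rightarrow> nat \<Rightarrow> real) \<Rightarrow> bool" where
  "local_view d n EST Msg Out \<longleftrightarrow>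
     (\<forall>v<n. \<forall>x\<in>space (inputs_space d n). \<forall>\<omega>. \<forall>i<d.
        EST x \<omega> i = Out v (x v) \<omega> (Msg v x \<omega>) i)"

definition bits_bound :: "normkind \<Rightarrow> nat \<Rightarrow> nat \<Rightarrow> real \<Rightarrow> real
    \<Rightarrow> (nat \<Rightarrow> (nat \<Rightarrow> nat \<Rightarrow> real) \<Rightarrow> (nat \<Rightarrow> bool) \<Rightarrow> bool list) \<Rightarrow> bool" where
  "bits_bound p d n \<sigma> b Msg \<longleftrightarrow>
     (\<forall>v<n. (\<lambda>z. Msg v (fst z) (snd z))
              \<in> measurable (inputs_space d n \<Otimes>\<^sub>M coins) (count_space UNIV)) \<and>
     (\<forall>g D. valid_input p d n \<sigma> g D \<longrightarrow>
        (\<forall>v<n. (\<integral>\<^sup>+z. of_nat (length (Msg v (fst z) (snd z))) \<partial>joint n D) \<le> ennreal b))"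

end

theory Submission
  imports Defs
begin


definition alph :: "normkind \<Rightarrow> nat \<Rightarrow> real" where
  "alph p d = (case p of L1 \<Rightarrow> real d | L2 \<Rightarrow> sqrt (real d) | Linf \<Rightarrow> 1)"
definition bet :: "normkind \<Rightarrow> nat \<Rightarrow> real" where
  "bet p d = (case p of L1 \<Rightarrow> 1 | L2 \<Rightarrow> sqrt (real d) | Linf \<Rightarrow> real d)"

lemma alph_bet: "alph p d * bet p d = real d"
  by (cases p) (auto simp: alph_def bet_def)

lemma alph_pos: "d \<ge> 1 \<Longrightarrow> alph p d > 0"
  by (cases p) (auto simp: alph_def)
lemma bet_pos: "d \<ge> 1 \<Longrightarrow> bet p d > 0"
  by (cases p) (auto simp: bet_def)

lemma vnorm_nonneg: assumes "d \<ge> 1" shows "vnorm p d w \<ge> 0"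
proof (cases p)
  case Linf
  show ?thesis
  proof (cases "d = 0")
    case False
    then have "\<bar>w 0\<bar> \<le> Max ((\<lambda>i. \<bar>w i\<bar>) ` {..<d})" by (intro Max_ge) auto
    then show ?thesis using Linf by (simp add: vnorm_def)
  qed (use assms in simp)
qed (auto simp: vnorm_def intro: sum_nonneg)

lemma sum_abs_le_vnorm:
  assumes "d \<ge> 1"
  shows "(\<Sum>i<d. \<bar>w i\<bar>) \<le> bet p d * vnorm p d w"
proof (cases p)
  case L1 then show ?thesis by (simp add: vnorm_def bet_def)
next
  case L2
  have "(\<Sum>i<d. \<bar>w i\<bar>)\<^sup>2 \<le> (\<Sum>i<d. \<bar>w i\<bar>\<^sup>2) * card {..<d}"
    by (rule sum_squared_le_sum_of_squares)
  also have "\<dots> = real d * (\<Sum>i<d. (w i)\<^sup>2)" by simp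
  finally have "(\<Sum>i<d. \<bar>w i\<bar>) \<le> sqrt (real d * (\<Sum>i<d. (w i)\<^sup>2))"
    by (simp add: real_le_rsqrt)
  then show ?thesis using L2 by (simp add: vnorm_def bet_def real_sqrt_mult)
next
  case Linf
  have "(\<Sum>i<d. \<bar>w i\<bar>) \<le> (\<Sum>i<d. Max ((\<lambda>i. \<bar>w i\<bar>) ` {..<d}))"
    by (intro sum_mono Max_ge) auto
  then show ?thesis using Linf by (simp add: vnorm_def bet_def)
qed

lemma vnorm_box:
  assumes "d \<ge> 1" "s \<ge> 0" "\<And>i. i < d \<Longrightarrow> \<bar>w i\<bar> \<le> s * M"
  shows "vnorm p d w \<le> alph p d * s * M"
proof (cases p)
  case L1
  have "(\<Sum>i<d. \<bar>w i\<bar>) \<le> (\<Sum>i<d. s * M)" by (intro sum_mono assms) auto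
  then show ?thesis using L1 by (simp add: vnorm_def alph_def)
next
  case L2
  have sM: "s * M \<ge> 0" using assms(3)[of 0] assms(1) by auto
  have "(\<Sum>i<d. (w i)\<^sup>2) \<le> (\<Sum>i<d. (s * M)\<^sup>2)"
  proof (intro sum_mono)
    fix i assume "i \<in> {..<d}"
    then have "\<bar>w i\<bar> ^ 2 \<le> (s * M) ^ 2" using assms(3) by (intro power_mono) auto
    then show "(w i)\<^sup>2 \<le> (s * M)\<^sup>2" by simp
  qed
  then have "sqrt (\<Sum>i<d. (w i)\<^sup>2) \<le> sqrt (real d * (s * M)\<^sup>2)" by simp
  also have "\<dots> = sqrt (real d) * (s * M)" using sM by (simp add: real_sqrt_mult)
  finally show ?thesis using L2 by (simp add: vnorm_def alph_def mult.assoc)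
next
  case Linf
  have "Max ((\<lambda>i. \<bar>w i\<bar>) ` {..<d}) \<le> s * M"
    using assms by (subst Max_le_iff) (auto simp: lessThan_empty_iff)
  then show ?thesis using Linf by (simp add: vnorm_def alph_def)
qed

lemma vnorm_measurable[measurable]:
  assumes "\<And>i. i < d \<Longrightarrow> f i \<in> borel_measurable M"
  shows "(\<lambda>z. vnorm p d (\<lambda>i. f i z)) \<in> borel_measurable M"
proof (cases p)
  case L1
  have eq: "(\<lambda>z. vnorm p d (\<lambda>i. f i z)) = (\<lambda>z. \<Sum>i<d. \<bar>f i z\<bar>)"
    using L1 by (simp add: vnorm_def fun_eq_iff)
  have "(\<lambda>z. \<Sum>i<d. \<bar>f i z\<bar>) \<in> borel_measurable M"
    using assms by (intro borel_measurable_sum borel_measurable_abs) auto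
  then show ?thesis by (simp only: eq)
next
  case L2
  have eq: "(\<lambda>z. vnorm p d (\<lambda>i. f i z)) = (\<lambda>z. sqrt (\<Sum>i<d. (f i z)\<^sup>2))"
    using L2 by (simp add: vnorm_def fun_eq_iff)
  have "(\<lambda>z. sqrt (\<Sum>i<d. (f i z)\<^sup>2)) \<in> borel_measurable M"
    using assms by (intro measurable_compose[OF _ borel_measurable_sqrt] borel_measurable_sum borel_measurable_power) auto
  then show ?thesis by (simp only: eq)
next
  case Linf
  have eq: "(\<lambda>z. vnorm p d (\<lambda>i. f i z)) = (\<lambda>x. Max ((\<lambda>i. \<bar>f i x\<bar>) ` {..<d}))"
    using Linf by (simp add: vnorm_def fun_eq_iff)
  have "(\<lambda>x. Max ((\<lambda>i. \<bar>f i x\<bar>) ` {..<d})) \<in> borel_measurable M"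
    using assms by (intro borel_measurable_Max borel_measurable_abs) auto
  then show ?thesis by (simp only: eq)
qed

lemma geom_bound:
  fixes f :: "'a \<Rightarrow> real"
  assumes "finite F" "inj_on h F" "\<And>k. k \<in> F \<Longrightarrow> f k \<le> q ^ h k" "0 \<le> q" "q < 1"
  shows "sum f F \<le> 1 / (1 - q)"
proof -
  have "sum f F \<le> sum (\<lambda>k. q ^ h k) F" by (intro sum_mono assms)
  also have "\<dots> = sum (\<lambda>j. q ^ j) (h ` F)" using assms(2) by (simp add: sum.reindex)
  also have "\<dots> \<le> (\<Sum>j. q ^ j)"
    using assms by (intro sum_le_suminf summable_geometric) auto
  also have "\<dots> = 1 / (1 - q)" using assms by (simp add: suminf_geometric)
  finally show ?thesis .
qed

lemma exp_sum_1d: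
  assumes "la > 0"
  shows "(\<Sum>k\<in>{0..<N::int}. exp (- la * \<bar>b - real_of_int k\<bar>)) \<le> 2 / (1 - exp (- la))"
proof -
  define q where "q = exp (- la)"
  have q: "0 \<le> q" "q < 1" using assms by (auto simp: q_def)
  define F1 where "F1 = {k\<in>{0..<N}. k \<ge> \<lceil>b\<rceil>}"
  define F2 where "F2 = {k\<in>{0..<N}. \<not> k \<ge> \<lceil>b\<rceil>}"
  have fin: "finite F1" "finite F2" unfolding F1_def F2_def by (rule finite_subset[of _ "{0..<N}"], auto)+
  have split: "{0..<N} = F1 \<union> F2" "F1 \<inter> F2 = {}" by (auto simp: F1_def F2_def)
  have qpow: "q ^ j = exp (- la * real j)" for j
    by (simp add: q_def exp_of_nat_mult[symmetric] mult.commute)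
  have s1: "(\<Sum>k\<in>F1. exp (- la * \<bar>b - real_of_int k\<bar>)) \<le> 1 / (1 - q)"
  proof (rule geom_bound[where h = "\<lambda>k. nat (k - \<lceil>b\<rceil>)"])
    show "inj_on (\<lambda>k. nat (k - \<lceil>b\<rceil>)) F1" by (auto simp: F1_def inj_on_def)
    fix k assume k: "k \<in> F1"
    then have "real_of_int k - b \<ge> real (nat (k - \<lceil>b\<rceil>))" "real_of_int k \<ge> b"
      by (auto simp: F1_def) (use ceiling_correct[of b] in linarith)+
    then have "- la * \<bar>b - real_of_int k\<bar> \<le> - la * real (nat (k - \<lceil>b\<rceil>))"
      using assms by (auto intro!: mult_left_mono)
    then show "exp (- la * \<bar>b - real_of_int k\<bar>) \<le> q ^ nat (k - \<lceil>b\<rceil>)" by (simp add: qpow)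
  qed (use fin q in auto)
  have s2: "(\<Sum>k\<in>F2. exp (- la * \<bar>b - real_of_int k\<bar>)) \<le> 1 / (1 - q)"
  proof (rule geom_bound[where h = "\<lambda>k. nat (\<lceil>b\<rceil> - 1 - k)"])
    show "inj_on (\<lambda>k. nat (\<lceil>b\<rceil> - 1 - k)) F2" by (auto simp: F2_def inj_on_def)
    fix k assume k: "k \<in> F2"
    then have "k \<le> \<lceil>b\<rceil> - 1" by (auto simp: F2_def)
    moreover have "real_of_int (\<lceil>b\<rceil> - 1) < b" by linarith
    ultimately have "b - real_of_int k \<ge> real (nat (\<lceil>b\<rceil> - 1 - k))" "b \<ge> real_of_int k"
      by auto
    then have "- la * \<bar>b - real_of_int k\<bar> \<le> - la * real (nat (\<lceil>b\<rceil> - 1 - k))"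
      using assms by (auto intro!: mult_left_mono)
    then show "exp (- la * \<bar>b - real_of_int k\<bar>) \<le> q ^ nat (\<lceil>b\<rceil> - 1 - k)" by (simp add: qpow)
  qed (use fin q in auto)
  have "(\<Sum>k\<in>{0..<N::int}. exp (- la * \<bar>b - real_of_int k\<bar>)) =
     (\<Sum>k\<in>F1. exp (- la * \<bar>b - real_of_int k\<bar>)) + (\<Sum>k\<in>F2. exp (- la * \<bar>b - real_of_int k\<bar>))"
    unfolding split(1) by (rule sum.union_disjoint) (use fin split(2) in auto)
  also have "\<dots> \<le> 1 / (1 - q) + 1 / (1 - q)" using s1 s2 by (rule add_mono)
  also have "\<dots> = 2 / (1 - q)" by (simp add: add_divide_distrib[symmetric])
  finally show ?thesis by (simp only: q_def)
qed

lemma inv_one_minus_exp: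
  fixes x :: real
  assumes "x > 0"
  shows "1 / (1 - exp (- x)) \<le> 1 + 1 / x"
proof -
  have e: "exp (- x) < 1" using assms exp_less_cancel_iff[of "-x" 0] by simp
  have "x + 1 \<le> exp x" by (rule order.trans[OF _ exp_ge_add_one_self]) simp
  then have "exp (- x) * (x + 1) \<le> 1" by (simp add: exp_minus field_simps)
  then have "x \<le> (x + 1) * (1 - exp (- x))" by (simp add: algebra_simps)
  then show ?thesis using assms e by (simp add: field_simps)
qed

lemma count_L1:
  assumes "d \<ge> 1" "R > 0"
  shows "real (card {k \<in> PiE {..<d} (\<lambda>_. {0..<N::int}). (\<Sum>i<d. \<bar>b i - real_of_int (k i)\<bar>) < R})
         \<le> (2 * exp 1 * (1 + R / real d)) ^ d"
proof -
  define la where "la = real d / R"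
  have lam: "la > 0" using assms by (simp add: la_def)
  define G where "G = PiE {..<d} (\<lambda>_. {0..<N::int})"
  define S where "S = {k \<in> G. (\<Sum>i<d. \<bar>b i - real_of_int (k i)\<bar>) < R}"
  have fG: "finite G" by (simp add: G_def finite_PiE)
  have expsplit: "exp (la * (R - (\<Sum>i<d. a i))) = exp (la * R) * (\<Prod>i<d. exp (- la * a i))"
    for a :: "nat \<Rightarrow> real"
  proof -
    have "la * (R - (\<Sum>i<d. a i)) = la * R + (\<Sum>i<d. - la * a i)"
      by (simp add: sum_distrib_left right_diff_distrib sum_negf)
    then show ?thesis by (simp add: exp_add exp_sum)
  qed
  have "real (card S) = (\<Sum>k\<in>S. 1)" by simp
  also have "\<dots> \<le> (\<Sum>k\<in>S. exp (la * (R - (\<Sum>i<d. \<bar>b i - real_of_int (k i)\<bar>))))"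
    by (intro sum_mono) (auto simp: S_def lam less_imp_le)
  also have "\<dots> \<le> (\<Sum>k\<in>G. exp (la * (R - (\<Sum>i<d. \<bar>b i - real_of_int (k i)\<bar>))))"
    using fG by (intro sum_mono2) (auto simp: S_def)
  also have "\<dots> = (\<Sum>k\<in>G. exp (la * R) * (\<Prod>i<d. exp (- la * \<bar>b i - real_of_int (k i)\<bar>)))"
    by (intro sum.cong refl expsplit)
  also have "\<dots> = exp (la * R) * (\<Prod>i<d. \<Sum>x\<in>{0..<N}. exp (- la * \<bar>b i - real_of_int x\<bar>))"
    by (simp add: G_def sum_distrib_left[symmetric] prod_sum_PiE)
  also have "\<dots> \<le> exp (la * R) * (\<Prod>i<d. 2 / (1 - exp (- la)))"
    using lam by (intro mult_left_mono prod_mono conjI exp_sum_1d) (auto intro: sum_nonneg)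
  also have "\<dots> = exp (real d) * (2 / (1 - exp (- la))) ^ d"
    using assms by (simp add: la_def)
  also have "\<dots> \<le> exp (real d) * (2 * (1 + R / real d)) ^ d"
    using inv_one_minus_exp[OF lam] lam assms
    by (intro mult_left_mono power_mono) (auto simp: la_def field_simps)
  also have "\<dots> = (2 * exp 1 * (1 + R / real d)) ^ d"
  proof -
    have "exp (real d) = exp 1 ^ d" using exp_of_nat_mult[of d 1] by simp
    then show ?thesis by (simp only: power_mult_distrib mult_ac)
  qed
  finally show ?thesis by (simp add: S_def G_def)
qed




lemma prob_space_coins: "prob_space coins"
  unfolding coins_def by (intro prob_space_PiM prob_space_measure_pmf)

lemma PiM_split:
  fixes V :: "'b measure" and D :: "nat \<Rightarrow> 'b measure" and Q :: "'a measure"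
  assumes n: "n \<ge> 1" and pQ: "prob_space Q" and f: "f \<in> measurable Q V" and y: "y \<in> space V"
    and D0: "D 0 = distr Q V f"
    and Dv: "\<And>v. v \<noteq> 0 \<Longrightarrow> prob_space (D v) \<and> sets (D v) = sets V \<and> (\<forall>A\<in>sets V. emeasure (D v) A = indicator A y)"
  shows "PiM {..<n} D = distr Q (PiM {..<n} (\<lambda>_. V)) (\<lambda>a. (\<lambda>v\<in>{..<n}. if v = 0 then f a else y))"
proof -
  have sD: "sets (D v) = sets V" for v
    using Dv[of v] by (cases "v = 0") (auto simp: D0)
  have pD: "prob_space (D v)" for v
    using Dv[of v] prob_space.prob_space_distr[OF pQ f] by (cases "v = 0") (auto simp: D0)
  interpret D: product_sigma_finite D
    unfolding product_sigma_finite_def using pD prob_space_imp_sigma_finite by auto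
  define E where "E = (\<lambda>a. (\<lambda>v\<in>{..<n}. if v = 0 then f a else y))"
  have Em: "E \<in> measurable Q (PiM {..<n} (\<lambda>_. V))"
    unfolding E_def using f y by (intro measurable_restrict) auto
  have Epi: "E a \<in> PiE {..<n} A \<longleftrightarrow> (\<forall>v\<in>{..<n}. (if v = 0 then f a else y) \<in> A v)" for a A
    unfolding E_def by (rule restrict_PiE_iff)
  have em1: "emeasure (D v) B = indicator B y" if "v \<noteq> 0" "B \<in> sets V" for v B
    using Dv[OF that(1)] that(2) by blast
  have "distr Q (PiM {..<n} (\<lambda>_. V)) E = PiM {..<n} D"
  proof (rule D.PiM_eqI)
    show "sets (distr Q (PiM {..<n} (\<lambda>_. V)) E) = sets (PiM {..<n} D)"
      by (simp only: sets_distr) (rule sets_PiM_cong, simp_all add: sD)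
  next
    fix A assume A: "\<And>i. i \<in> {..<n} \<Longrightarrow> A i \<in> sets (D i)"
    have AV: "A i \<in> sets V" if "i \<in> {..<n}" for i using A[OF that] sD by simp
    have PA: "PiE {..<n} A \<in> sets (PiM {..<n} (\<lambda>_. V))"
      using AV by (intro sets_PiM_I_finite) auto
    have n0: "{..<n} = insert 0 {1..<n}" using n by auto
    have D0e: "emeasure (D 0) (A 0) = emeasure Q (f -` A 0 \<inter> space Q)"
      unfolding D0 using AV[of 0] n by (intro emeasure_distr f) auto
    have "emeasure (distr Q (PiM {..<n} (\<lambda>_. V)) E) (PiE {..<n} A)
        = emeasure Q (E -` PiE {..<n} A \<inter> space Q)"
      by (rule emeasure_distr[OF Em PA])
    also have "\<dots> = (\<Prod>i\<in>{..<n}. emeasure (D i) (A i))"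
    proof (cases "\<forall>v\<in>{1..<n}. y \<in> A v")
      case True
      have "E a \<in> PiE {..<n} A \<longleftrightarrow> f a \<in> A 0" for a
      proof -
        have "(\<forall>v\<in>{..<n}. (if v = 0 then f a else y) \<in> A v) \<longleftrightarrow> f a \<in> A 0"
        proof
          assume H: "\<forall>v\<in>{..<n}. (if v = 0 then f a else y) \<in> A v"
          have "0 \<in> {..<n}" using n by simp
          from bspec[OF H this] show "f a \<in> A 0" by simp
        next
          assume "f a \<in> A 0"
          then show "\<forall>v\<in>{..<n}. (if v = 0 then f a else y) \<in> A v" using True by simp
        qed
        then show ?thesis using Epi[of a A] by blast
      qed
      then have "E -` PiE {..<n} A \<inter> space Q = f -` A 0 \<inter> space Q" by blast
      moreover have "(\<Prod>i\<in>{1..<n}. emeasure (D i) (A i)) = 1"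
      proof (rule prod.neutral, rule ballI)
        fix i assume i: "i \<in> {1..<n}"
        then have "emeasure (D i) (A i) = indicator (A i) y" by (intro em1 AV) auto
        then show "emeasure (D i) (A i) = 1" using True i by simp
      qed
      ultimately show ?thesis unfolding n0 by (simp add: prod.insert D0e)
    next
      case False
      then obtain v where v: "v \<in> {1..<n}" "y \<notin> A v" by auto
      have "E a \<notin> PiE {..<n} A" for a
      proof -
        have "\<not> (\<forall>v\<in>{..<n}. (if v = 0 then f a else y) \<in> A v)"
        proof
          assume H: "\<forall>v\<in>{..<n}. (if v = 0 then f a else y) \<in> A v"
          have "v \<in> {..<n}" "v \<noteq> 0" using v(1) by auto
          with bspec[OF H this(1)] v(2) show False by simp
        qed
        then show ?thesis using Epi[of a A] by blast
      qed
      then have "E -` PiE {..<n} A \<inter> space Q = {}" by blast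
      moreover have "(\<Prod>i\<in>{1..<n}. emeasure (D i) (A i)) = 0"
      proof (rule prod_zero)
        have "emeasure (D v) (A v) = indicator (A v) y" using v by (intro em1 AV) auto
        then show "\<exists>a\<in>{1..<n}. emeasure (D a) (A a) = 0" using v by auto
      qed simp
      ultimately show ?thesis unfolding n0 by (simp add: prod.insert)
    qed
    finally show "emeasure (distr Q (PiM {..<n} (\<lambda>_. V)) E) (PiE {..<n} A) = (\<Prod>i\<in>{..<n}. emeasure (D i) (A i))" .
  qed simp
  then show ?thesis by (simp add: E_def)
qed

lemma joint_nn:
  fixes V :: "'b measure" and D :: "nat \<Rightarrow> 'b measure" and Q :: "'a measure"
  assumes n: "n \<ge> 1" and pQ: "prob_space Q" and f: "f \<in> measurable Q V" and y: "y \<in> space V"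
    and D0: "D 0 = distr Q V f"
    and Dv: "\<And>v. v \<noteq> 0 \<Longrightarrow> prob_space (D v) \<and> sets (D v) = sets V \<and> (\<forall>A\<in>sets V. emeasure (D v) A = indicator A y)"
    and F: "F \<in> borel_measurable (PiM {..<n} (\<lambda>_. V) \<Otimes>\<^sub>M coins)"
  shows "(\<integral>\<^sup>+z. F z \<partial>(PiM {..<n} D \<Otimes>\<^sub>M coins))
       = (\<integral>\<^sup>+a. (\<integral>\<^sup>+\<omega>. F ((\<lambda>v\<in>{..<n}. if v = 0 then f a else y), \<omega>) \<partial>coins) \<partial>Q)"
proof -
  interpret C: prob_space coins by (rule prob_space_coins)
  define E where "E = (\<lambda>a. (\<lambda>v\<in>{..<n}. if v = 0 then f a else y))"
  have Em: "E \<in> measurable Q (PiM {..<n} (\<lambda>_. V))"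
    unfolding E_def using f y by (intro measurable_restrict) auto
  have P: "PiM {..<n} D = distr Q (PiM {..<n} (\<lambda>_. V)) E"
    unfolding E_def using assms(1-6) by (rule PiM_split)
  have F': "F \<in> borel_measurable (distr Q (PiM {..<n} (\<lambda>_. V)) E \<Otimes>\<^sub>M coins)"
    using F by (subst measurable_cong_sets[OF sets_pair_measure_cong[OF sets_distr refl] refl])
  have "(\<integral>\<^sup>+z. F z \<partial>(PiM {..<n} D \<Otimes>\<^sub>M coins))
      = (\<integral>\<^sup>+x. (\<integral>\<^sup>+\<omega>. F (x, \<omega>) \<partial>coins) \<partial>distr Q (PiM {..<n} (\<lambda>_. V)) E)"
    unfolding P by (rule C.nn_integral_fst[OF F', symmetric])
  also have "\<dots> = (\<integral>\<^sup>+a. (\<integral>\<^sup>+\<omega>. F (E a, \<omega>) \<partial>coins) \<partial>Q)"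
    by (rule nn_integral_distr[OF Em C.borel_measurable_nn_integral_fst[OF F']])
  finally show ?thesis by (simp add: E_def)
qed


definition vecs :: "nat \<Rightarrow> real \<Rightarrow> (nat \<Rightarrow> int) \<Rightarrow> nat \<Rightarrow> real" where
  "vecs d s k = (\<lambda>i\<in>{..<d}. s * real_of_int (k i))"
definition addk :: "nat \<Rightarrow> (nat \<Rightarrow> int) \<Rightarrow> (nat \<Rightarrow> int) \<Rightarrow> nat \<Rightarrow> int" where
  "addk d k j = (\<lambda>i\<in>{..<d}. k i + j i)"
definition boxi :: "nat \<Rightarrow> int \<Rightarrow> int \<Rightarrow> (nat \<Rightarrow> int) set" where
  "boxi d a b = PiE {..<d} (\<lambda>_. {a..b})"
definition zerov :: "nat \<Rightarrow> nat \<Rightarrow> int" where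
  "zerov d = (\<lambda>i\<in>{..<d}. 0)"
definition Dm :: "nat \<Rightarrow> real \<Rightarrow> (nat \<Rightarrow> int) \<Rightarrow> (nat \<Rightarrow> int) set \<Rightarrow> (nat \<Rightarrow> real) measure" where
  "Dm d s k W = distr (measure_pmf (pmf_of_set W)) (vec_space d) (\<lambda>j. vecs d s (addk d k j))"
definition DD :: "nat \<Rightarrow> real \<Rightarrow> (nat \<Rightarrow> int) \<Rightarrow> (nat \<Rightarrow> int) set \<Rightarrow> nat \<Rightarrow> (nat \<Rightarrow> real) measure" where
  "DD d s k Z v = Dm d s k (if v = 0 then Z else {zerov d})"

lemma space_vec_space: "space (vec_space d) = PiE {..<d} (\<lambda>_. UNIV)"
  by (simp add: vec_space_def space_PiM)

lemma vecs_space[simp]: "vecs d s k \<in> space (vec_space d)"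
  by (simp add: space_vec_space vecs_def)

lemma vecs_meas[simp]: "(\<lambda>j. vecs d s (addk d k j)) \<in> measurable (measure_pmf P) (vec_space d)"
  by simp

lemma finite_boxi[simp]: "finite (boxi d a b)"
  by (simp add: boxi_def finite_PiE)

lemma card_boxi: "card (boxi d a b) = nat (b - a + 1) ^ d"
  by (simp add: boxi_def card_PiE)

lemma boxi_nonempty: "a \<le> b \<Longrightarrow> boxi d a b \<noteq> {}"
  by (simp add: boxi_def PiE_eq_empty_iff)

lemma vecs_addk_zero: "vecs d s (addk d k (zerov d)) = vecs d s k"
  by (simp add: vecs_def addk_def zerov_def fun_eq_iff)

lemma vecs_addk_i: "i < d \<Longrightarrow> vecs d s (addk d k j) i = s * real_of_int (k i) + s * real_of_int (j i)"
  by (simp add: vecs_def addk_def distrib_left)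

lemma vnorm_cong: "(\<And>i. i < d \<Longrightarrow> w i = w' i) \<Longrightarrow> vnorm p d w = vnorm p d w'"
  unfolding vnorm_def by (cases p) (auto intro!: sum.cong arg_cong[where f=Max] image_cong)

lemma zerov_boxi: "m \<ge> 0 \<Longrightarrow> zerov d \<in> boxi d (-m) m"
  by (simp add: zerov_def boxi_def)

lemma mem_boxi: "j \<in> boxi d a b \<longleftrightarrow> (\<forall>i<d. a \<le> j i \<and> j i \<le> b) \<and> (\<forall>i. \<not> i < d \<longrightarrow> j i = undefined)"
  by (auto simp: boxi_def PiE_iff extensional_def)

lemma sum_boxi_sym: "i < d \<Longrightarrow> (\<Sum>j\<in>boxi d (-m) m. real_of_int (j i)) = 0"
proof -
  assume i: "i < d"
  define ng where "ng = (\<lambda>j::nat\<Rightarrow>int. (\<lambda>i\<in>{..<d}. - j i))"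
  have ngb: "ng j \<in> boxi d (-m) m" if "j \<in> boxi d (-m) m" for j
  proof -
    have "\<forall>i<d. - m \<le> j i \<and> j i \<le> m" using that by (simp add: mem_boxi)
    then have "\<forall>i<d. - m \<le> ng j i \<and> ng j i \<le> m" by (auto simp: ng_def)
    moreover have "\<forall>i. \<not> i < d \<longrightarrow> ng j i = undefined" by (simp add: ng_def)
    ultimately show ?thesis by (simp add: mem_boxi)
  qed
  have ngng: "ng (ng j) = j" if "j \<in> boxi d (-m) m" for j
  proof
    fix i show "ng (ng j) i = j i"
      using that by (cases "i < d") (simp_all add: ng_def mem_boxi)
  qed
  have "(\<Sum>j\<in>boxi d (-m) m. real_of_int (j i)) = (\<Sum>j\<in>boxi d (-m) m. real_of_int (ng j i))"
    by (rule sum.reindex_bij_witness[of _ ng ng]) (use ngb ngng in auto)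
  also have "\<dots> = - (\<Sum>j\<in>boxi d (-m) m. real_of_int (j i))"
    using i by (simp add: ng_def sum_negf)
  finally show ?thesis by simp
qed

lemma Dm_facts:
  assumes d: "d \<ge> 1" and sig: "\<sigma> > 0" and m: "m \<ge> 1" and s: "s = \<sigma> / (real m * alph p d)"
    and W: "W \<subseteq> boxi d (- int m) (int m)" "W \<noteq> {}"
    and sym: "\<And>i. i < d \<Longrightarrow> (\<Sum>j\<in>W. real_of_int (j i)) = 0"
  shows "prob_space (Dm d s k W)" "sets (Dm d s k W) = sets (vec_space d)"
    "\<And>i. i < d \<Longrightarrow> integrable (Dm d s k W) (\<lambda>x. x i)"
    "\<And>i. i < d \<Longrightarrow> (\<integral>x. x i \<partial>Dm d s k W) = vecs d s k i"
    "(\<integral>\<^sup>+x. ennreal ((vnorm p d (\<lambda>i. x i - vecs d s k i))\<^sup>2) \<partial>Dm d s k W) \<le> ennreal (\<sigma>\<^sup>2)"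
proof -
  have fW: "finite W" using W(1) by (rule finite_subset) simp
  show "prob_space (Dm d s k W)"
    unfolding Dm_def by (rule prob_space.prob_space_distr[OF prob_space_measure_pmf vecs_meas])
  show "sets (Dm d s k W) = sets (vec_space d)" by (simp add: Dm_def)
  have compm: "(\<lambda>x. x i) \<in> borel_measurable (vec_space d)" if "i < d" for i
    unfolding vec_space_def using that by (intro measurable_component_singleton) auto
  fix i assume i: "i < d"
  show "integrable (Dm d s k W) (\<lambda>x. x i)"
    unfolding Dm_def using fW W(2)
    by (subst integrable_distr_eq[OF vecs_meas compm[OF i]]) (intro integrable_measure_pmf_finite, simp)
  have "(\<integral>x. x i \<partial>Dm d s k W) = (\<integral>j. vecs d s (addk d k j) i \<partial>measure_pmf (pmf_of_set W))"
    unfolding Dm_def by (rule integral_distr[OF vecs_meas compm[OF i]])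
  also have "\<dots> = (\<Sum>j\<in>W. vecs d s (addk d k j) i) / card W"
    by (rule integral_pmf_of_set[OF W(2) fW])
  also have "\<dots> = (\<Sum>j\<in>W. s * real_of_int (k i) + s * real_of_int (j i)) / card W"
    using i by (simp add: vecs_addk_i)
  also have "\<dots> = (card W * (s * real_of_int (k i)) + s * (\<Sum>j\<in>W. real_of_int (j i))) / card W"
    by (simp add: sum.distrib sum_distrib_left)
  also have "\<dots> = s * real_of_int (k i)"
    using sym[OF i] fW W(2) by simp
  also have "\<dots> = vecs d s k i" using i by (simp add: vecs_def)
  finally show "(\<integral>x. x i \<partial>Dm d s k W) = vecs d s k i" .
next
  have fW: "finite W" using W(1) by (rule finite_subset) simp
  have compm: "(\<lambda>x. x i) \<in> borel_measurable (vec_space d)" if "i < d" for i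
    unfolding vec_space_def using that by (intro measurable_component_singleton) auto
  have vm: "(\<lambda>x. vnorm p d (\<lambda>i. x i - vecs d s k i)) \<in> borel_measurable (vec_space d)"
    by (rule vnorm_measurable[where f = "\<lambda>i x. x i - vecs d s k i"]) (intro borel_measurable_diff compm borel_measurable_const)
  have vm2: "(\<lambda>x. ennreal ((vnorm p d (\<lambda>i. x i - vecs d s k i))\<^sup>2)) \<in> borel_measurable (vec_space d)"
    using vm by measurable
  have alph: "alph p d > 0" using alph_pos[OF d] .
  have spos: "s > 0" using sig m alph by (simp add: s)
  have sm: "alph p d * s * real m = \<sigma>" using alph m by (simp add: s field_simps)
  have pt: "(vnorm p d (\<lambda>i. vecs d s (addk d k j) i - vecs d s k i))\<^sup>2 \<le> \<sigma>\<^sup>2"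
    if j: "j \<in> W" for j
  proof -
    have jb: "\<bar>j i\<bar> \<le> int m" if "i < d" for i
      using W(1) j that unfolding mem_boxi subset_iff by (metis abs_le_iff minus_le_iff)
    have "vnorm p d (\<lambda>i. vecs d s (addk d k j) i - vecs d s k i) = vnorm p d (\<lambda>i. s * real_of_int (j i))"
      by (rule vnorm_cong) (simp add: vecs_addk_i, simp add: vecs_def)
    also have "\<dots> \<le> alph p d * s * real m"
    proof (rule vnorm_box[OF d])
      fix i assume "i < d"
      then have "\<bar>real_of_int (j i)\<bar> \<le> real m" using jb by (metis of_int_abs of_int_of_nat_eq of_int_le_iff)
      then show "\<bar>s * real_of_int (j i)\<bar> \<le> s * real m" using spos by (simp add: abs_mult)
    qed (use spos in simp)
    finally have "vnorm p d (\<lambda>i. vecs d s (addk d k j) i - vecs d s k i) \<le> \<sigma>" using sm by simp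
    moreover have "vnorm p d (\<lambda>i. vecs d s (addk d k j) i - vecs d s k i) \<ge> 0" by (rule vnorm_nonneg[OF d])
    ultimately show ?thesis by (intro power_mono) auto
  qed
  have "(\<integral>\<^sup>+x. ennreal ((vnorm p d (\<lambda>i. x i - vecs d s k i))\<^sup>2) \<partial>Dm d s k W)
      = (\<integral>\<^sup>+j. ennreal ((vnorm p d (\<lambda>i. vecs d s (addk d k j) i - vecs d s k i))\<^sup>2) \<partial>measure_pmf (pmf_of_set W))"
    unfolding Dm_def by (rule nn_integral_distr[OF vecs_meas]) (use vm2 in simp)
  also have "\<dots> \<le> (\<integral>\<^sup>+j. ennreal (\<sigma>\<^sup>2) \<partial>measure_pmf (pmf_of_set W))"
    by (rule nn_integral_mono_AE) (simp add: AE_measure_pmf_iff set_pmf_of_set[OF W(2) fW] pt)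
  also have "\<dots> = ennreal (\<sigma>\<^sup>2)" by simp
  finally show "(\<integral>\<^sup>+x. ennreal ((vnorm p d (\<lambda>i. x i - vecs d s k i))\<^sup>2) \<partial>Dm d s k W) \<le> ennreal (\<sigma>\<^sup>2)" .
qed


lemma DD_valid:
  assumes d: "d \<ge> 1" and sig: "\<sigma> > 0" and m: "m \<ge> 1" and s: "s = \<sigma> / (real m * alph p d)"
  shows "valid_input p d n \<sigma> (vecs d s k) (DD d s k (boxi d (- int m) (int m)))"
proof -
  have W: "(if v = 0 then boxi d (- int m) (int m) else {zerov d}) \<subseteq> boxi d (- int m) (int m)"
          "(if v = 0 then boxi d (- int m) (int m) else {zerov d}) \<noteq> {}"
          "\<And>i. i < d \<Longrightarrow> (\<Sum>j\<in>(if v = 0 then boxi d (- int m) (int m) else {zerov d}). real_of_int (j i)) = 0"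
    for v
    using zerov_boxi[of "int m" d] boxi_nonempty[of "- int m" "int m" d] sum_boxi_sym[of _ d "int m"]
    by (auto simp: zerov_def)
  show ?thesis
    unfolding valid_input_def DD_def
    using Dm_facts[OF d sig m s W] by blast
qed

lemma DD_joint:
  assumes n: "n \<ge> 1" and F: "F \<in> borel_measurable (inputs_space d n \<Otimes>\<^sub>M coins)"
    and Z: "Z \<noteq> {}" "finite Z"
  shows "(\<integral>\<^sup>+z. F z \<partial>joint n (DD d s k Z))
       = (\<Sum>j\<in>Z. \<integral>\<^sup>+\<omega>. F ((\<lambda>v\<in>{..<n}. if v = 0 then vecs d s (addk d k j) else vecs d s k), \<omega>) \<partial>coins) / card Z"
proof -
  have Dv: "prob_space (DD d s k Z v) \<and> sets (DD d s k Z v) = sets (vec_space d) \<and>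
     (\<forall>A\<in>sets (vec_space d). emeasure (DD d s k Z v) A = indicator A (vecs d s k))" if "v \<noteq> 0" for v
  proof (intro conjI ballI)
    show "prob_space (DD d s k Z v)"
      unfolding DD_def Dm_def by (rule prob_space.prob_space_distr[OF prob_space_measure_pmf vecs_meas])
    show "sets (DD d s k Z v) = sets (vec_space d)" by (simp add: DD_def Dm_def)
    fix A assume A: "A \<in> sets (vec_space d)"
    have "emeasure (DD d s k Z v) A = emeasure (measure_pmf (pmf_of_set {zerov d})) ((\<lambda>j. vecs d s (addk d k j)) -` A \<inter> UNIV)"
      using that unfolding DD_def Dm_def by (simp add: emeasure_distr[OF vecs_meas A])
    also have "\<dots> = indicator A (vecs d s k)"
      by (simp add: pmf_of_set_singleton vecs_addk_zero indicator_def)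
    finally show "emeasure (DD d s k Z v) A = indicator A (vecs d s k)" .
  qed
  have D0: "DD d s k Z 0 = distr (measure_pmf (pmf_of_set Z)) (vec_space d) (\<lambda>j. vecs d s (addk d k j))"
    by (simp add: DD_def Dm_def)
  have F': "F \<in> borel_measurable (PiM {..<n} (\<lambda>_. vec_space d) \<Otimes>\<^sub>M coins)"
    using F by (simp add: inputs_space_def)
  have "(\<integral>\<^sup>+z. F z \<partial>joint n (DD d s k Z))
     = (\<integral>\<^sup>+j. (\<integral>\<^sup>+\<omega>. F ((\<lambda>v\<in>{..<n}. if v = 0 then vecs d s (addk d k j) else vecs d s k), \<omega>) \<partial>coins) \<partial>measure_pmf (pmf_of_set Z))"
    unfolding joint_def
    by (rule joint_nn[where V="vec_space d" and D="DD d s k Z" and Q="measure_pmf (pmf_of_set Z)"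
          and f="\<lambda>j. vecs d s (addk d k j)" and y="vecs d s k" and n=n and F=F,
          OF n prob_space_measure_pmf vecs_meas vecs_space D0 Dv F'])
  also have "\<dots> = (\<Sum>j\<in>Z. \<integral>\<^sup>+\<omega>. F ((\<lambda>v\<in>{..<n}. if v = 0 then vecs d s (addk d k j) else vecs d s k), \<omega>) \<partial>coins) / card Z"
    by (rule nn_integral_pmf_of_set[OF Z])
  finally show ?thesis .
qed


lemma card_as_sum: "finite A \<Longrightarrow> real (card {x\<in>A. P x}) = (\<Sum>x\<in>A. if P x then 1 else 0)"
  by (simp add: sum.inter_filter[symmetric])

lemma ball_count:
  assumes d: "d \<ge> 1" and sig: "\<sigma> > 0" and m: "m \<ge> 1" and sc: "sc = \<sigma> / (real m * alph p d)"
    and r: "r > 0"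
  shows "real (card {k \<in> PiE {..<d} (\<lambda>_. {0..<N::int}). vnorm p d (\<lambda>i. a i - vecs d sc k i) < r})
         \<le> (2 * exp 1 * (1 + r * real m / \<sigma>)) ^ d"
proof -
  have alph: "alph p d > 0" using alph_pos[OF d] .
  have bet: "bet p d > 0" using bet_pos[OF d] .
  have scp: "sc > 0" using sig m alph by (simp add: sc)
  define R where "R = bet p d * r / sc"
  have Rp: "R > 0" using bet r scp by (simp add: R_def)
  have Rd: "R / real d = r * real m / \<sigma>"
  proof -
    have "R = bet p d * r * real m * alph p d / \<sigma>" using sig m alph by (simp add: R_def sc field_simps)
    also have "\<dots> = real d * (r * real m / \<sigma>)" by (simp add: alph_bet[of p d, symmetric] field_simps)
    finally show ?thesis using d by simp
  qed
  have sub: "{k \<in> PiE {..<d} (\<lambda>_. {0..<N::int}). vnorm p d (\<lambda>i. a i - vecs d sc k i) < r}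
      \<subseteq> {k \<in> PiE {..<d} (\<lambda>_. {0..<N::int}). (\<Sum>i<d. \<bar>a i / sc - real_of_int (k i)\<bar>) < R}"
  proof safe
    fix k assume k: "k \<in> PiE {..<d} (\<lambda>_. {0..<N::int})" and v: "vnorm p d (\<lambda>i. a i - vecs d sc k i) < r"
    have "(\<Sum>i<d. \<bar>a i - vecs d sc k i\<bar>) \<le> bet p d * vnorm p d (\<lambda>i. a i - vecs d sc k i)"
      by (rule sum_abs_le_vnorm[OF d])
    also have "\<dots> < bet p d * r" using v bet by simp
    finally have lt: "(\<Sum>i<d. \<bar>a i - vecs d sc k i\<bar>) < bet p d * r" .
    have "(\<Sum>i<d. \<bar>a i - vecs d sc k i\<bar>) = sc * (\<Sum>i<d. \<bar>a i / sc - real_of_int (k i)\<bar>)"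
    proof -
      have "\<bar>a i - vecs d sc k i\<bar> = sc * \<bar>a i / sc - real_of_int (k i)\<bar>" if "i \<in> {..<d}" for i
      proof -
        have "a i - vecs d sc k i = sc * (a i / sc - real_of_int (k i))"
          using that scp by (simp add: vecs_def field_simps)
        then show ?thesis using scp by (simp add: abs_mult)
      qed
      then show ?thesis by (simp add: sum_distrib_left)
    qed
    with lt show "(\<Sum>i<d. \<bar>a i / sc - real_of_int (k i)\<bar>) < R"
      using scp by (simp add: R_def field_simps)
  qed
  have "real (card {k \<in> PiE {..<d} (\<lambda>_. {0..<N::int}). vnorm p d (\<lambda>i. a i - vecs d sc k i) < r})
     \<le> real (card {k \<in> PiE {..<d} (\<lambda>_. {0..<N::int}). (\<Sum>i<d. \<bar>a i / sc - real_of_int (k i)\<bar>) < R})"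
    by (intro of_nat_mono card_mono sub) (simp add: finite_PiE)
  also have "\<dots> \<le> (2 * exp 1 * (1 + R / real d)) ^ d"
    by (rule count_L1[OF d Rp])
  finally show ?thesis by (simp only: Rd)
qed

lemma comb:
  fixes G Z T :: "(nat \<Rightarrow> int) set" and SL :: "'s set"
  assumes fin: "finite G" "finite Z" "finite T" "finite SL"
    and inj: "\<And>k. k \<in> G \<Longrightarrow> inj_on (addk d k) Z"
    and img: "\<And>k j. k \<in> G \<Longrightarrow> j \<in> Z \<Longrightarrow> addk d k j \<in> T"
    and near: "\<And>k j. k \<in> G \<Longrightarrow> j \<in> Z \<Longrightarrow> Pr k j \<Longrightarrow> \<exists>s\<in>SL. Nr (addk d k j) s k"
    and cnt: "\<And>t s. real (card {k \<in> G. Nr t s k}) \<le> C"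
  shows "(\<Sum>k\<in>G. \<Sum>j\<in>Z. (if Pr k j then 1 else 0 :: real)) \<le> real (card T) * real (card SL) * C"
proof -
  define Q where "Q t k = (if \<exists>s\<in>SL. Nr t s k then 1 else (0::real))" for t k
  have "(\<Sum>k\<in>G. \<Sum>j\<in>Z. (if Pr k j then 1 else 0 :: real)) \<le> (\<Sum>k\<in>G. \<Sum>j\<in>Z. Q (addk d k j) k)"
    using near by (intro sum_mono) (auto simp: Q_def)
  also have "\<dots> = (\<Sum>k\<in>G. \<Sum>t\<in>addk d k ` Z. Q t k)"
  proof (rule sum.cong[OF refl])
    fix k assume k: "k \<in> G"
    show "(\<Sum>j\<in>Z. Q (addk d k j) k) = (\<Sum>t\<in>addk d k ` Z. Q t k)"
      using sum.reindex[OF inj[OF k], of "\<lambda>t. Q t k"] by (simp add: comp_def)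
  qed
  also have "\<dots> \<le> (\<Sum>k\<in>G. \<Sum>t\<in>T. Q t k)"
    using img fin by (intro sum_mono sum_mono2) (auto simp: Q_def)
  also have "\<dots> = (\<Sum>t\<in>T. \<Sum>k\<in>G. Q t k)" by (rule sum.swap)
  also have "\<dots> \<le> (\<Sum>t\<in>T. \<Sum>k\<in>G. \<Sum>s\<in>SL. (if Nr t s k then 1 else 0))"
  proof (intro sum_mono)
    fix t k assume "t \<in> T" "k \<in> G"
    show "Q t k \<le> (\<Sum>s\<in>SL. if Nr t s k then 1 else 0)"
    proof (cases "\<exists>s\<in>SL. Nr t s k")
      case True
      then obtain s where s: "s \<in> SL" "Nr t s k" by blast
      have "(if Nr t s k then 1 else 0) \<le> (\<Sum>s\<in>SL. if Nr t s k then 1 else (0::real))"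
        using s fin by (intro member_le_sum) auto
      then show ?thesis using True s by (simp add: Q_def)
    qed (simp add: Q_def sum_nonneg)
  qed
  also have "\<dots> = (\<Sum>t\<in>T. \<Sum>s\<in>SL. \<Sum>k\<in>G. (if Nr t s k then 1 else 0))"
    by (intro sum.cong refl sum.swap)
  also have "\<dots> = (\<Sum>t\<in>T. \<Sum>s\<in>SL. real (card {k \<in> G. Nr t s k}))"
    using fin by (simp add: card_as_sum)
  also have "\<dots> \<le> (\<Sum>t\<in>T. \<Sum>s\<in>SL. C)" by (intro sum_mono cnt)
  also have "\<dots> = real (card T) * real (card SL) * C" by simp
  finally show ?thesis .
qed


lemma one_plus_inv_pow: "d \<ge> 1 \<Longrightarrow> (1 + 1 / real d) ^ d \<le> exp 1"
proof -
  assume d: "d \<ge> 1"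
  have "1 + 1 / real d \<le> exp (1 / real d)" by (rule exp_ge_add_one_self)
  then have "(1 + 1 / real d) ^ d \<le> exp (1 / real d) ^ d" by (intro power_mono) auto
  also have "\<dots> = exp (real d * (1 / real d))" by (rule exp_of_nat_mult[symmetric])
  also have "\<dots> = exp 1" using d by simp
  finally show ?thesis .
qed

lemma arith_main:
  fixes d m N :: nat and X \<kappa> :: real
  assumes d: "d \<ge> 1" and m: "m \<ge> 1" and N: "N = 2 * m * d" and X: "X > 0" and k: "\<kappa> > 0"
    and kd: "\<kappa> ^ d * (18 * X) = 1" and mk: "real m * \<kappa> \<ge> 2 * exp 1"
  shows "real (N + 2 * m) ^ d * X * (2 * exp 1 * (1 + \<kappa> * real m / (4 * exp 1))) ^ d
         \<le> real (2 * m + 1) ^ d * real N ^ d / 6"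
proof -
  have Np: "real N > 0" using d m by (simp add: N)
  have "real (N + 2 * m) = real N * (1 + 1 / real d)"
    using d m by (simp add: N field_simps)
  then have NN: "real (N + 2 * m) ^ d = real N ^ d * (1 + 1 / real d) ^ d"
    by (simp add: power_mult_distrib)
  have c1: "2 * exp 1 * (1 + \<kappa> * real m / (4 * exp 1)) = 2 * exp 1 + \<kappa> * real m / 2"
    by (simp add: field_simps)
  have c2a: "real (2 * m + 1) * \<kappa> = 2 * (real m * \<kappa>) + \<kappa>" by (simp add: algebra_simps)
  have c2b: "\<kappa> * real m / 2 = (real m * \<kappa>) / 2" by simp
  have c2: "2 * exp 1 + \<kappa> * real m / 2 \<le> real (2 * m + 1) * \<kappa>"
    unfolding c2a c2b using mk k exp_gt_zero[of 1] by linarith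
  have c3: "(2 * exp 1 + \<kappa> * real m / 2) ^ d \<le> real (2 * m + 1) ^ d * \<kappa> ^ d"
    using power_mono[OF c2, of d] k by (simp add: power_mult_distrib)
  have e3: "(1 + 1 / real d) ^ d \<le> 3" using one_plus_inv_pow[OF d] exp_le by linarith
  have "real (N + 2 * m) ^ d * X * (2 * exp 1 * (1 + \<kappa> * real m / (4 * exp 1))) ^ d
      = real N ^ d * X * ((1 + 1 / real d) ^ d * (2 * exp 1 + \<kappa> * real m / 2) ^ d)"
    unfolding NN c1 by (simp only: mult_ac)
  also have "\<dots> \<le> real N ^ d * X * (3 * (real (2 * m + 1) ^ d * \<kappa> ^ d))"
    using Np X k exp_gt_zero[of 1] by (intro mult_left_mono mult_mono e3 c3 zero_le_power) auto
  also have "\<dots> = real N ^ d * real (2 * m + 1) ^ d * 3 * (\<kappa> ^ d * X)"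
    by (simp only: mult_ac)
  also have "\<kappa> ^ d * X = 1 / 18" using kd by (simp add: field_simps)
  finally show ?thesis by (simp add: mult.commute)
qed

lemma kappa_facts:
  fixes d :: nat and X :: real
  assumes d: "d \<ge> 1" and X: "X > 0"
  shows "((18 * X) powr (- 1 / real d)) ^ d * (18 * X) = 1"
    "((18 * X) powr (- 1 / real d)) ^ 2 = (18 * X) powr (- 2 / real d)"
proof -
  have p: "18 * X > 0" using X by simp
  have "((18 * X) powr (- 1 / real d)) ^ d = ((18 * X) powr (- 1 / real d)) powr real d"
    using p by (simp add: powr_realpow)
  also have "\<dots> = (18 * X) powr (- 1)" using d by (simp add: powr_powr)
  also have "\<dots> = inverse (18 * X)" using p by (simp add: powr_minus)
  finally have K: "((18 * X) powr (- 1 / real d)) ^ d = inverse (18 * X)" .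
  show "((18 * X) powr (- 1 / real d)) ^ d * (18 * X) = 1"
    unfolding K using p by simp
  have "((18 * X) powr (- 1 / real d)) ^ 2 = ((18 * X) powr (- 1 / real d)) powr (real 2)"
    using p by (simp add: powr_realpow)
  also have "\<dots> = (18 * X) powr (- 2 / real d)" by (simp add: powr_powr)
  finally show "((18 * X) powr (- 1 / real d)) ^ 2 = (18 * X) powr (- 2 / real d)" .
qed

lemma kappa_lower:
  fixes d :: nat and b X :: real
  assumes d: "d \<ge> 1" and b: "b \<ge> 0" and X: "X > 0" and Xb: "X \<le> 2 * 2 powr (3 * b / 2)"
  shows "2 powr (- 3 * b / real d) / 1296 \<le> (18 * X) powr (- 2 / real d)"
proof -
  have "(36 * 2 powr (3 * b / 2)) powr (- 2 / real d) \<le> (18 * X) powr (- 2 / real d)"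
    using X Xb by (intro powr_mono2') auto
  moreover have "(36 * 2 powr (3 * b / 2)) powr (- 2 / real d) = 36 powr (- 2 / real d) * 2 powr (- 3 * b / real d)"
    by (simp add: powr_mult powr_powr)
  moreover have "36 powr (- 2) \<le> 36 powr (- 2 / real d)"
    using d by (intro powr_mono) (auto simp: field_simps)
  moreover have "(36::real) powr (- 2) = 1 / 1296"
    by (simp add: powr_minus powr_numeral)
  ultimately have A: "36 powr (- 2 / real d) * 2 powr (- 3 * b / real d) \<le> (18 * X) powr (- 2 / real d)"
    and B: "1 / 1296 \<le> (36::real) powr (- 2 / real d)" by simp_all
  have "2 powr (- 3 * b / real d) / 1296 = (1 / 1296) * 2 powr (- 3 * b / real d)" by simp
  also have "\<dots> \<le> 36 powr (- 2 / real d) * 2 powr (- 3 * b / real d)"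
    by (rule mult_right_mono[OF B]) simp
  finally show ?thesis using A by linarith
qed


lemma card_SL: "real (card {s::bool list. length s \<le> L}) \<le> 2 ^ (L + 1)"
proof -
  have "card {s::bool list. length s \<le> L} = (\<Sum>i\<le>L. 2 ^ i)"
    using card_lists_length_le[of "UNIV :: bool set" L] by simp
  moreover have "(\<Sum>i\<le>L. (2::nat) ^ i) < 2 ^ (L + 1)"
    by (induction L) auto
  ultimately have "card {s::bool list. length s \<le> L} \<le> 2 ^ (L + 1)" by simp
  then show ?thesis by (metis of_nat_le_iff of_nat_numeral of_nat_power)
qed

lemma finite_SL: "finite {s::bool list. length s \<le> L}"
  using finite_lists_length_le[of "UNIV :: bool set" L] by simp

definition c0 :: real where "c0 = 1 / 1119744"

lemma main:
  fixes p d n \<sigma> b EST Msg Out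
  assumes d: "d \<ge> 1" and n: "n \<ge> 1" and sig: "\<sigma> > 0" and b: "b \<ge> 0"
    and unb: "unbiased p d n \<sigma> EST" and lv: "local_view d n EST Msg Out" and bb: "bits_bound p d n \<sigma> b Msg"
  shows "\<exists>g D. valid_input p d n \<sigma> g D \<and>
       ennreal (c0 * \<sigma>\<^sup>2 * 2 powr (- 3 * b / real d))
         \<le> (\<integral>\<^sup>+z. ennreal ((vnorm p d (\<lambda>i. EST (fst z) (snd z) i - g i))\<^sup>2) \<partial>joint n D)"
proof (rule ccontr)
  assume contra: "\<not> ?thesis"
  define L where "L = nat \<lfloor>3 * b / 2\<rfloor>"
  define SL where "SL = {s::bool list. length s \<le> L}"
  define X where "X = (2::real) ^ (L + 1)"
  have Xp: "X > 0" by (simp add: X_def)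
  have XSL: "real (card SL) \<le> X" unfolding SL_def X_def by (rule card_SL)
  have finSL: "finite SL" unfolding SL_def by (rule finite_SL)
  have L32: "real L \<le> 3 * b / 2" "3 * b / 2 < real L + 1"
    using b by (simp_all add: L_def) linarith+
  have Xb: "X \<le> 2 * 2 powr (3 * b / 2)"
  proof -
    have "X = 2 * 2 powr real L" by (simp add: X_def powr_realpow)
    also have "\<dots> \<le> 2 * 2 powr (3 * b / 2)" using L32 by (intro mult_left_mono powr_mono) auto
    finally show ?thesis .
  qed
  have Lb: "b / real (L + 1) \<le> 2 / 3" using L32 b by (simp add: field_simps)
  define \<kappa> where "\<kappa> = (18 * X) powr (- 1 / real d)"
  have kp: "\<kappa> > 0" using Xp by (simp add: \<kappa>_def)
  have kd: "\<kappa> ^ d * (18 * X) = 1" unfolding \<kappa>_def by (rule kappa_facts(1)[OF d Xp])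
  have k2: "\<kappa> ^ 2 = (18 * X) powr (- 2 / real d)" unfolding \<kappa>_def by (rule kappa_facts(2)[OF d Xp])
  define m where "m = nat \<lceil>2 * exp 1 / \<kappa>\<rceil>"
  have mge: "real m \<ge> 2 * exp 1 / \<kappa>" unfolding m_def by linarith
  have m1: "m \<ge> 1"
  proof -
    have "2 * exp 1 / \<kappa> > 0" using kp by simp
    then show ?thesis unfolding m_def by linarith
  qed
  have mk: "real m * \<kappa> \<ge> 2 * exp 1" using mge kp by (simp add: field_simps)
  define N where "N = 2 * m * d"
  have N1: "N \<ge> 1" using m1 d by (simp add: N_def)
  define sc where "sc = \<sigma> / (real m * alph p d)"
  define r where "r = \<sigma> * \<kappa> / (4 * exp 1)"
  have rp: "r > 0" using sig kp by (simp add: r_def)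
  define B where "B = c0 * \<sigma>\<^sup>2 * 2 powr (- 3 * b / real d)"
  have Br: "B \<le> r\<^sup>2 / 6"
  proof -
    have e9: "(exp 1)\<^sup>2 \<le> (9::real)" using power_mono[OF exp_le, of 2] by simp
    have "B = \<sigma>\<^sup>2 * (2 powr (- 3 * b / real d) / 1296) / 864" by (simp add: B_def c0_def)
    also have "\<dots> \<le> \<sigma>\<^sup>2 * \<kappa>\<^sup>2 / 864"
      using kappa_lower[OF d b Xp Xb] k2 by (intro divide_right_mono mult_left_mono) auto
    also have "\<dots> \<le> \<sigma>\<^sup>2 * \<kappa>\<^sup>2 / (96 * (exp 1)\<^sup>2)"
      using e9 by (intro divide_left_mono) (auto intro!: mult_pos_pos)
    also have "\<dots> = r\<^sup>2 / 6" by (simp add: r_def power_divide power_mult_distrib)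
    finally show ?thesis .
  qed
  define G where "G = PiE {..<d} (\<lambda>_. {0..<int N})"
  define Z where "Z = boxi d (- int m) (int m)"
  define T where "T = boxi d (- int m) (int N - 1 + int m)"
  define DK where "DK k = DD d sc k Z" for k
  define S where "S = inputs_space d n \<Otimes>\<^sub>M coins"
  have finG: "finite G" by (simp add: G_def finite_PiE)
  have cardG: "card G = N ^ d" by (simp add: G_def card_PiE)
  have cardZ: "card Z = (2 * m + 1) ^ d"
  proof -
    have "nat (int m - - int m + 1) = 2 * m + 1" by linarith
    then show ?thesis by (simp only: Z_def card_boxi)
  qed
  have cardT: "card T = (N + 2 * m) ^ d"
  proof -
    have "nat (int N - 1 + int m - - int m + 1) = N + 2 * m" by linarith
    then show ?thesis by (simp only: T_def card_boxi)
  qed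
  have finZ: "finite Z" "Z \<noteq> {}" by (simp_all add: Z_def boxi_nonempty)
  have Gne: "G \<noteq> {}" using N1 by (simp add: G_def PiE_eq_empty_iff)
  have valid: "valid_input p d n \<sigma> (vecs d sc k) (DK k)" for k
    unfolding DK_def Z_def by (rule DD_valid[OF d sig m1 sc_def])
  have setsDK: "sets (DK k v) = sets (vec_space d)" for k v by (simp add: DK_def DD_def Dm_def)
  have setsJ: "sets (joint n (DK k)) = sets S" for k
    unfolding joint_def S_def inputs_space_def
    by (intro sets_pair_measure_cong sets_PiM_cong refl setsDK)
  have spJ: "space (joint n (DK k)) = space S" for k by (rule sets_eq_imp_space_eq[OF setsJ])
  have probJ: "prob_space (joint n (DK k))" for k
  proof -
    have "prob_space (DK k v)" for v
      unfolding DK_def DD_def Dm_def by (rule prob_space.prob_space_distr[OF prob_space_measure_pmf vecs_meas])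
    then show ?thesis unfolding joint_def by (intro prob_space_pair prob_space_PiM prob_space_coins)
  qed
  have estm: "(\<lambda>z. EST (fst z) (snd z) i) \<in> borel_measurable S" if i: "i < d" for i
  proof -
    have "integrable (joint n (DK (\<lambda>_. 0))) (\<lambda>z. EST (fst z) (snd z) i)"
      using unb valid[of "\<lambda>_. 0"] i unfolding unbiased_def by blast
    then have "(\<lambda>z. EST (fst z) (snd z) i) \<in> borel_measurable (joint n (DK (\<lambda>_. 0)))"
      by (rule borel_measurable_integrable)
    then show ?thesis by (simp add: measurable_cong_sets[OF setsJ refl])
  qed
  define er where "er k z = vnorm p d (\<lambda>i. EST (fst z) (snd z) i - vecs d sc k i)" for k z
  define ln where "ln z = length (Msg 0 (fst z) (snd z))" for z
  have erm: "er k \<in> borel_measurable S" for k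
    unfolding er_def
    by (rule vnorm_measurable[where f = "\<lambda>i z. EST (fst z) (snd z) i - vecs d sc k i"])
       (intro borel_measurable_diff estm borel_measurable_const, assumption)
  have msgm: "(\<lambda>z. Msg 0 (fst z) (snd z)) \<in> measurable S (count_space UNIV)"
    using bb n unfolding bits_bound_def S_def by auto
  have lnm: "ln \<in> measurable S (count_space UNIV)"
    unfolding ln_def by (rule measurable_compose[OF msgm]) simp
  define Lg where "Lg = {z \<in> space S. L + 1 \<le> ln z}"
  define Nr where "Nr k = {z \<in> space S. ln z \<le> L \<and> er k z < r}" for k
  define Fr where "Fr k = {z \<in> space S. ln z \<le> L \<and> r \<le> er k z}" for k
  have sLg: "Lg \<in> sets S"
  proof -
    have "Lg = ln -` {L+1..} \<inter> space S" by (auto simp: Lg_def)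
    then show ?thesis using measurable_sets[OF lnm, of "{L+1..}"] by simp
  qed
  have sA: "{z \<in> space S. ln z \<le> L} \<in> sets S"
  proof -
    have "{z \<in> space S. ln z \<le> L} = ln -` {..L} \<inter> space S" by auto
    then show ?thesis using measurable_sets[OF lnm, of "{..L}"] by simp
  qed
  have sNr: "Nr k \<in> sets S" for k
  proof -
    have "Nr k = {z \<in> space S. ln z \<le> L} \<inter> (er k -` {..<r} \<inter> space S)" by (auto simp: Nr_def)
    then show ?thesis using sA measurable_sets[OF erm, of "{..<r}"] by auto
  qed
  have sFr: "Fr k \<in> sets S" for k
  proof -
    have "Fr k = {z \<in> space S. ln z \<le> L} \<inter> (er k -` {r..} \<inter> space S)" by (auto simp: Fr_def)
    then show ?thesis using sA measurable_sets[OF erm, of "{r..}"] by auto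
  qed
  have perk: "measure (joint n (DK k)) Lg + measure (joint n (DK k)) (Nr k) + measure (joint n (DK k)) (Fr k) = 1"
          "measure (joint n (DK k)) Lg \<le> 2 / 3"
          "(\<integral>\<^sup>+z. ennreal ((er k z)\<^sup>2) \<partial>joint n (DK k)) < ennreal B \<Longrightarrow> measure (joint n (DK k)) (Fr k) < 1 / 6"
    for k
  proof -
    interpret P: prob_space "joint n (DK k)" by (rule probJ)
    have sLg': "Lg \<in> sets (joint n (DK k))" using sLg setsJ by simp
    have sNr': "Nr k \<in> sets (joint n (DK k))" using sNr setsJ by simp
    have sFr': "Fr k \<in> sets (joint n (DK k))" using sFr setsJ by simp
    have un: "Lg \<union> (Nr k \<union> Fr k) = space (joint n (DK k))"
      unfolding spJ by (auto simp: Lg_def Nr_def Fr_def)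
    have "1 = measure (joint n (DK k)) (Lg \<union> (Nr k \<union> Fr k))" unfolding un by (simp add: P.prob_space)
    also have "\<dots> = measure (joint n (DK k)) Lg + measure (joint n (DK k)) (Nr k \<union> Fr k)"
      by (rule P.finite_measure_Union[OF sLg']) (use sNr' sFr' in \<open>auto simp: Lg_def Nr_def Fr_def\<close>)
    also have "measure (joint n (DK k)) (Nr k \<union> Fr k) = measure (joint n (DK k)) (Nr k) + measure (joint n (DK k)) (Fr k)"
      by (rule P.finite_measure_Union[OF sNr' sFr']) (auto simp: Nr_def Fr_def)
    finally show "measure (joint n (DK k)) Lg + measure (joint n (DK k)) (Nr k) + measure (joint n (DK k)) (Fr k) = 1"
      by simp
    have "ennreal (real (L + 1)) * emeasure (joint n (DK k)) Lg
        = (\<integral>\<^sup>+z. ennreal (real (L + 1)) * indicator Lg z \<partial>joint n (DK k))"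
      by (rule nn_integral_cmult_indicator[symmetric, OF sLg'])
    also have "\<dots> \<le> (\<integral>\<^sup>+z. of_nat (ln z) \<partial>joint n (DK k))"
    proof (rule nn_integral_mono)
      fix z
      show "ennreal (real (L + 1)) * indicator Lg z \<le> of_nat (ln z)"
      proof (cases "z \<in> Lg")
        case True
        then have "L + 1 \<le> ln z" by (simp add: Lg_def)
        then have "ennreal (real (L + 1)) \<le> ennreal (real (ln z))" by (intro ennreal_leI) simp
        then show ?thesis using True by (simp add: ennreal_of_nat_eq_real_of_nat)
      qed simp
    qed
    also have "\<dots> \<le> ennreal b"
      using bb valid[of k] n unfolding bits_bound_def ln_def by auto
    finally have "ennreal (real (L + 1) * measure (joint n (DK k)) Lg) \<le> ennreal b"
      by (simp add: P.emeasure_eq_measure ennreal_mult)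
    then have "real (L + 1) * measure (joint n (DK k)) Lg \<le> b" using b by (simp add: ennreal_le_iff)
    then have "measure (joint n (DK k)) Lg \<le> b / real (L + 1)" by (simp add: field_simps)
    then show "measure (joint n (DK k)) Lg \<le> 2 / 3" using Lb by linarith
    assume e: "(\<integral>\<^sup>+z. ennreal ((er k z)\<^sup>2) \<partial>joint n (DK k)) < ennreal B"
    have "ennreal (r\<^sup>2) * emeasure (joint n (DK k)) (Fr k)
        = (\<integral>\<^sup>+z. ennreal (r\<^sup>2) * indicator (Fr k) z \<partial>joint n (DK k))"
      by (rule nn_integral_cmult_indicator[symmetric, OF sFr'])
    also have "\<dots> \<le> (\<integral>\<^sup>+z. ennreal ((er k z)\<^sup>2) \<partial>joint n (DK k))"
    proof (rule nn_integral_mono)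
      fix z
      show "ennreal (r\<^sup>2) * indicator (Fr k) z \<le> ennreal ((er k z)\<^sup>2)"
      proof (cases "z \<in> Fr k")
        case True
        then have "r \<le> er k z" by (simp add: Fr_def)
        then have "r\<^sup>2 \<le> (er k z)\<^sup>2" using rp by (intro power_mono) auto
        then show ?thesis using True by (simp add: ennreal_leI)
      qed simp
    qed
    also have "\<dots> < ennreal B" by (rule e)
    finally have "ennreal (r\<^sup>2 * measure (joint n (DK k)) (Fr k)) < ennreal B"
      by (simp add: P.emeasure_eq_measure ennreal_mult)
    then have "r\<^sup>2 * measure (joint n (DK k)) (Fr k) < B" by (simp add: ennreal_less_iff)
    then have "r\<^sup>2 * measure (joint n (DK k)) (Fr k) < r\<^sup>2 * (1 / 6)" using Br by simp
    then show "measure (joint n (DK k)) (Fr k) < 1 / 6" using rp by simp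
  qed
  define emb where "emb k j = (\<lambda>v\<in>{..<n}. if v = 0 then vecs d sc (addk d k j) else vecs d sc k)" for k j
  have embsp: "emb k j \<in> space (inputs_space d n)" for k j
    by (simp add: emb_def inputs_space_def space_PiM)
  have emb0: "emb k j 0 = vecs d sc (addk d k j)" for k j using n by (simp add: emb_def)
  have indm: "indicator (Nr k) \<in> borel_measurable (inputs_space d n \<Otimes>\<^sub>M coins)" for k
    using sNr[of k] unfolding S_def by (rule borel_measurable_indicator)
  have indm2: "(\<lambda>\<omega>. indicator (Nr k) (emb k j, \<omega>) :: ennreal) \<in> borel_measurable coins" for k j
    by (rule measurable_Pair2[OF indm embsp])
  define C where "C = (2 * exp 1 * (1 + r * real m / \<sigma>)) ^ d"
  have Cnn: "0 \<le> C"
  proof -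
    have "0 \<le> r * real m / \<sigma>" using rp sig by simp
    then have "0 \<le> 2 * exp 1 * (1 + r * real m / \<sigma>)" by simp
    then show ?thesis unfolding C_def by (rule zero_le_power)
  qed
  have J2: "of_nat (card Z) * emeasure (joint n (DK k)) (Nr k)
      = (\<Sum>j\<in>Z. \<integral>\<^sup>+\<omega>. indicator (Nr k) (emb k j, \<omega>) \<partial>coins)" for k
  proof -
    have "emeasure (joint n (DK k)) (Nr k) = (\<integral>\<^sup>+z. indicator (Nr k) z \<partial>joint n (DK k))"
      using sNr[of k] setsJ by simp
    also have "\<dots> = (\<Sum>j\<in>Z. \<integral>\<^sup>+\<omega>. indicator (Nr k) (emb k j, \<omega>) \<partial>coins) / of_nat (card Z)"
      unfolding DK_def emb_def by (rule DD_joint[OF n indm finZ(2) finZ(1)])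
    finally have E: "emeasure (joint n (DK k)) (Nr k) = (\<Sum>j\<in>Z. \<integral>\<^sup>+\<omega>. indicator (Nr k) (emb k j, \<omega>) \<partial>coins) / of_nat (card Z)" .
    have cz: "(of_nat (card Z) :: ennreal) \<noteq> 0" "(of_nat (card Z) :: ennreal) \<noteq> top"
      using finZ by (simp_all add: card_gt_0_iff)
    show ?thesis unfolding E ennreal_times_divide
      by (subst mult.commute) (rule ennreal_mult_divide_eq[OF cz])
  qed
  have pw: "(\<Sum>k\<in>G. \<Sum>j\<in>Z. indicator (Nr k) (emb k j, \<omega>) :: ennreal)
      \<le> ennreal (real (card T) * real (card SL) * C)" for \<omega>
  proof -
    have "(\<Sum>k\<in>G. \<Sum>j\<in>Z. (if (emb k j, \<omega>) \<in> Nr k then 1 else 0 :: real)) \<le> real (card T) * real (card SL) * C"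
    proof (rule comb[where Nr = "\<lambda>t s k. vnorm p d (\<lambda>i. Out 0 (vecs d sc t) \<omega> s i - vecs d sc k i) < r"])
      show "finite G" "finite Z" "finite T" "finite SL" using finG finZ finSL by (simp_all add: T_def)
    next
      fix k assume "k \<in> G"
      show "inj_on (addk d k) Z"
      proof (rule inj_onI)
        fix j j' assume jj: "j \<in> Z" "j' \<in> Z" "addk d k j = addk d k j'"
        show "j = j'"
        proof
          fix i show "j i = j' i"
          proof (cases "i < d")
            case True
            then have "addk d k j i = addk d k j' i" using jj by simp
            then show ?thesis using True by (simp add: addk_def)
          next
            case False
            then show ?thesis using jj(1,2) by (simp add: Z_def mem_boxi)
          qed
        qed
      qed
    next
      fix k j assume kj: "k \<in> G" "j \<in> Z"
      have "\<forall>i<d. 0 \<le> k i \<and> k i < int N" using kj(1) by (auto simp: G_def PiE_iff)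
      moreover have "\<forall>i<d. - int m \<le> j i \<and> j i \<le> int m" using kj(2) by (simp add: Z_def mem_boxi)
      ultimately have "\<forall>i<d. - int m \<le> addk d k j i \<and> addk d k j i \<le> int N - 1 + int m"
      proof (intro allI impI)
        fix i assume A: "\<forall>i<d. 0 \<le> k i \<and> k i < int N" and Bj: "\<forall>i<d. - int m \<le> j i \<and> j i \<le> int m"
          and i: "i < d"
        have "0 \<le> k i" "k i < int N" "- int m \<le> j i" "j i \<le> int m" using A Bj i by auto
        then show "- int m \<le> addk d k j i \<and> addk d k j i \<le> int N - 1 + int m"
          using i by (simp add: addk_def)
      qed
      then show "addk d k j \<in> T" by (simp add: T_def mem_boxi addk_def)
    next
      fix k j assume kj: "k \<in> G" "j \<in> Z" and P: "(emb k j, \<omega>) \<in> Nr k"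
      define s where "s = Msg 0 (emb k j) \<omega>"
      have sS: "s \<in> SL" using P by (simp add: Nr_def SL_def s_def ln_def)
      have "er k (emb k j, \<omega>) < r" using P by (simp add: Nr_def)
      moreover have "er k (emb k j, \<omega>) = vnorm p d (\<lambda>i. Out 0 (vecs d sc (addk d k j)) \<omega> s i - vecs d sc k i)"
        unfolding er_def
      proof (rule vnorm_cong)
        fix i assume i: "i < d"
        have "EST (emb k j) \<omega> i = Out 0 (emb k j 0) \<omega> (Msg 0 (emb k j) \<omega>) i"
          using lv n embsp i unfolding local_view_def by auto
        then show "EST (fst (emb k j, \<omega>)) (snd (emb k j, \<omega>)) i - vecs d sc k i
            = Out 0 (vecs d sc (addk d k j)) \<omega> s i - vecs d sc k i"
          by (simp add: emb0 s_def)
      qed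
      ultimately show "\<exists>s\<in>SL. vnorm p d (\<lambda>i. Out 0 (vecs d sc (addk d k j)) \<omega> s i - vecs d sc k i) < r"
        using sS by auto
    next
      fix t s
      show "real (card {k \<in> G. vnorm p d (\<lambda>i. Out 0 (vecs d sc t) \<omega> s i - vecs d sc k i) < r}) \<le> C"
        unfolding G_def C_def by (rule ball_count[OF d sig m1 sc_def rp])
    qed
    moreover have "(\<Sum>k\<in>G. \<Sum>j\<in>Z. indicator (Nr k) (emb k j, \<omega>) :: ennreal)
        = ennreal (\<Sum>k\<in>G. \<Sum>j\<in>Z. (if (emb k j, \<omega>) \<in> Nr k then 1 else 0 :: real))"
    proof -
      have ind: "indicator A x = ennreal (if x \<in> A then 1 else 0)" for A and x :: "(nat \<Rightarrow> nat \<Rightarrow> real) \<times> (nat \<Rightarrow> bool)"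
        by (simp add: indicator_def)
      have "(\<Sum>k\<in>G. \<Sum>j\<in>Z. indicator (Nr k) (emb k j, \<omega>) :: ennreal)
         = (\<Sum>k\<in>G. \<Sum>j\<in>Z. ennreal (if (emb k j, \<omega>) \<in> Nr k then 1 else 0))"
        by (simp only: ind)
      also have "\<dots> = ennreal (\<Sum>k\<in>G. \<Sum>j\<in>Z. (if (emb k j, \<omega>) \<in> Nr k then 1 else 0 :: real))"
        by (simp add: sum_nonneg)
      finally show ?thesis .
    qed
    ultimately show ?thesis by (simp add: ennreal_leI)
  qed
  have sumN: "(\<Sum>k\<in>G. measure (joint n (DK k)) (Nr k)) \<le> real (card G) / 6"
  proof -
    interpret Cn: prob_space coins by (rule prob_space_coins)
    have "ennreal (real (card Z) * (\<Sum>k\<in>G. measure (joint n (DK k)) (Nr k)))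
        = (\<Sum>k\<in>G. of_nat (card Z) * emeasure (joint n (DK k)) (Nr k))"
    proof -
      have "emeasure (joint n (DK k)) (Nr k) = ennreal (measure (joint n (DK k)) (Nr k))" for k
      proof -
        interpret P: prob_space "joint n (DK k)" by (rule probJ)
        show ?thesis by (rule P.emeasure_eq_measure)
      qed
      then have "(\<Sum>k\<in>G. of_nat (card Z) * emeasure (joint n (DK k)) (Nr k))
          = (\<Sum>k\<in>G. ennreal (real (card Z) * measure (joint n (DK k)) (Nr k)))"
        by (intro sum.cong refl) (simp add: ennreal_mult ennreal_of_nat_eq_real_of_nat)
      also have "\<dots> = ennreal (\<Sum>k\<in>G. real (card Z) * measure (joint n (DK k)) (Nr k))"
        by (rule sum_ennreal) simp
      finally show ?thesis by (simp add: sum_distrib_left)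
    qed
    also have "\<dots> = (\<Sum>k\<in>G. \<Sum>j\<in>Z. \<integral>\<^sup>+\<omega>. indicator (Nr k) (emb k j, \<omega>) \<partial>coins)"
      by (simp add: J2)
    also have "\<dots> = (\<integral>\<^sup>+\<omega>. (\<Sum>k\<in>G. \<Sum>j\<in>Z. indicator (Nr k) (emb k j, \<omega>)) \<partial>coins)"
    proof -
      have "(\<integral>\<^sup>+\<omega>. (\<Sum>j\<in>Z. indicator (Nr k) (emb k j, \<omega>)) \<partial>coins)
          = (\<Sum>j\<in>Z. \<integral>\<^sup>+\<omega>. indicator (Nr k) (emb k j, \<omega>) \<partial>coins)" for k
        by (rule nn_integral_sum) (rule indm2)
      moreover have "(\<integral>\<^sup>+\<omega>. (\<Sum>k\<in>G. \<Sum>j\<in>Z. indicator (Nr k) (emb k j, \<omega>)) \<partial>coins)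
          = (\<Sum>k\<in>G. \<integral>\<^sup>+\<omega>. (\<Sum>j\<in>Z. indicator (Nr k) (emb k j, \<omega>)) \<partial>coins)"
        by (rule nn_integral_sum) (intro borel_measurable_sum indm2)
      ultimately show ?thesis by simp
    qed
    also have "\<dots> \<le> (\<integral>\<^sup>+\<omega>. ennreal (real (card T) * real (card SL) * C) \<partial>coins)"
      by (intro nn_integral_mono pw)
    also have "\<dots> = ennreal (real (card T) * real (card SL) * C)"
      by (simp add: Cn.emeasure_space_1)
    finally have "real (card Z) * (\<Sum>k\<in>G. measure (joint n (DK k)) (Nr k)) \<le> real (card T) * real (card SL) * C"
      using finZ Cnn by (subst (asm) ennreal_le_iff) (auto intro!: mult_nonneg_nonneg)
    also have "\<dots> \<le> real (card T) * X * C"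
      using XSL Cnn by (intro mult_right_mono mult_left_mono) auto
    also have "\<dots> \<le> real (card Z) * real (card G) / 6"
    proof -
      have rC: "r * real m / \<sigma> = \<kappa> * real m / (4 * exp 1)" using sig by (simp add: r_def)
      have "real (N + 2 * m) ^ d * X * (2 * exp 1 * (1 + \<kappa> * real m / (4 * exp 1))) ^ d
         \<le> real (2 * m + 1) ^ d * real N ^ d / 6"
        by (rule arith_main[OF d m1 N_def Xp kp kd mk])
      then show ?thesis by (simp add: cardT cardZ cardG C_def rC)
    qed
    finally show ?thesis using finZ by (simp add: card_gt_0_iff field_simps)
  qed
  have ltB: "(\<integral>\<^sup>+z. ennreal ((er k z)\<^sup>2) \<partial>joint n (DK k)) < ennreal B" for k
    using contra valid[of k] unfolding er_def B_def by (auto simp: not_le)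
  have "real (card G) = (\<Sum>k\<in>G. 1)" by simp
  also have "\<dots> = (\<Sum>k\<in>G. measure (joint n (DK k)) Lg + measure (joint n (DK k)) (Nr k) + measure (joint n (DK k)) (Fr k))"
    using perk(1) by simp
  also have "\<dots> = (\<Sum>k\<in>G. measure (joint n (DK k)) Lg) + (\<Sum>k\<in>G. measure (joint n (DK k)) (Nr k)) + (\<Sum>k\<in>G. measure (joint n (DK k)) (Fr k))"
    by (simp add: sum.distrib)
  also have "\<dots> < (\<Sum>k\<in>G. 2 / 3) + real (card G) / 6 + (\<Sum>k\<in>G. 1 / 6)"
  proof -
    have "(\<Sum>k\<in>G. measure (joint n (DK k)) Lg) \<le> (\<Sum>k\<in>G. 2 / 3)" by (intro sum_mono perk(2))
    moreover have "(\<Sum>k\<in>G. measure (joint n (DK k)) (Fr k)) < (\<Sum>k\<in>G. 1 / 6)"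
      using finG Gne by (intro sum_strict_mono perk(3) ltB) auto
    ultimately show ?thesis using sumN by linarith
  qed
  also have "\<dots> = real (card G)" by simp
  finally show False by simp
qed


theorem theorem8:
  shows "\<exists>c>0. \<forall>p d n \<sigma> b EST Msg Out.
    d \<ge> 1 \<longrightarrow> n \<ge> 1 \<longrightarrow> \<sigma> > 0 \<longrightarrow> b \<ge> 0 \<longrightarrow>
    unbiased p d n \<sigma> EST \<longrightarrow> local_view d n EST Msg Out \<longrightarrow> bits_bound p d n \<sigma> b Msg \<longrightarrow>
    (\<exists>g D. valid_input p d n \<sigma> g D \<and>
       ennreal (c * \<sigma>\<^sup>2 * 2 powr (- 3 * b / real d))
         \<le> (\<integral>\<^sup>+z. ennreal ((vnorm p d (\<lambda>i. EST (fst z) (snd z) i - g i))\<^sup>2) \<partial>joint n D))"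
proof (intro exI[of _ c0] conjI allI impI)
  show "c0 > 0" by (simp add: c0_def)
next
  fix p d n \<sigma> b EST Msg Out
  assume "1 \<le> d" "1 \<le> n" "0 < \<sigma>" "0 \<le> b" "unbiased p d n \<sigma> EST"
    "local_view d n EST Msg Out" "bits_bound p d n \<sigma> b Msg"
  then show "\<exists>g D. valid_input p d n \<sigma> g D \<and>
       ennreal (c0 * \<sigma>\<^sup>2 * 2 powr (- 3 * b / real d))
         \<le> (\<integral>\<^sup>+z. ennreal ((vnorm p d (\<lambda>i. EST (fst z) (snd z) i - g i))\<^sup>2) \<partial>joint n D)"
    by (rule main)
qed

end
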